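(* Let $\tilde{\Phi}:\mathbb{R}_{++}^{n\times m}\to\mathbb{R}$ be a differentiable convex function which is positively 1-homogeneous ($\tilde{\Phi}(tA)=t\tilde{\Phi}(A)$ for all $t>0$, $A\in\mathbb{R}_{++}^{n\times m}$) and strictly convex on $\mathcal{P}_{nm-1}$, and suppose that its gradient $S:\mathbb{R}_{++}^{n\times m}\to\mathbb{R}^{n\times m}$, $S^{ij}(A)=\partial\tilde{\Phi}/\partial A_{ij}(A)$, restricted to $\mathcal{P}_{nm-1}$ and composed with the quotient map, induces a bijection $\mathcal{P}_{nm-1}\to\mathbb{R}^{n\times m}/\langle 1_{nm}\rangle$. Let $\Phi$ be the restriction of $\tilde{\Phi}$ to $\mathcal{P}_{nm-1}$. Then for each $p\in\mathcal{P}_{n-1}$, $q\in\mathcal{P}_{m-1}$, the problem of minimizing $\Phi(P)$ over $P\in\Pi(p,q)$ has a unique solution $P^*(p,q)\in\Pi(p,q)$, and there exists $(\alpha^*,\beta^* )\in\mathbb{R}^n\times\mathbb{R}^m$ with \[ S^{ij}(P^*(p,q))=(\alpha^* )^i+(\beta^* )^j,\qquad 1\le i\le n,\ 1\le j\le m. \]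
   Context: $\mathbb{R}_{++}^{n\times m}$ denotes the set of real $n\times m$ matrices with all entries strictly positive. $\mathcal{P}_{n-1}=\{p\in\mathbb{R}^n:\sum_i p_i=1,\ p_i>0\}$, similarly $\mathcal{P}_{m-1}$, and $\mathcal{P}_{nm-1}=\{P\in\mathbb{R}_{++}^{n\times m}:\sum_{i,j}P_{ij}=1\}$. $\Pi(p,q)=\{P\in\mathcal{P}_{nm-1}:\sum_j P_{ij}=p_i\ \forall i,\ \sum_i P_{ij}=q_j\ \forall j\}$. $1_{nm}$ is the $n\times m$ matrix with all entries equal to $1$, and $\mathbb{R}^{n\times m}/\langle 1_{nm}\rangle$ is the quotient vector space by the relation $u\sim v\iff u-v=c\,1_{nm}$ for some $c\in\mathbb{R}$. *)

theory Defs
  imports "HOL-Analysis.Analysis"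
begin

text \<open>Matrices in R^{n x m} are rendered as real^'m^'n (row index i::'n, column index j::'m).\<close>

definition pos_mats :: "(real^'m^'n) set" where
  "pos_mats = {A. \<forall>i j. A $ i $ j > 0}"

definition simplex_vec :: "(real^'n) set" where
  "simplex_vec = {p. (\<forall>i. p $ i > 0) \<and> (\<Sum>i\<in>UNIV. p $ i) = 1}"

definition simplex_mat :: "(real^'m^'n) set" where
  "simplex_mat = {P \<in> pos_mats. (\<Sum>i\<in>UNIV. \<Sum>j\<in>UNIV. P $ i $ j) = 1}"

definition couplings :: "real^'n \<Rightarrow> real^'m \<Rightarrow> (real^'m^'n) set" where
  "couplings p q = {P \<in> simplex_mat.
     (\<forall>i. (\<Sum>j\<in>UNIV. P $ i $ j) = p $ i) \<and> (\<forall>j. (\<Sum>i\<in>UNIV. P $ i $ j) = q $ j)}"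

definition ones_mat :: "real^'m^'n" where
  "ones_mat = (\<chi> i j. 1)"

text \<open>Equivalence class of B in the quotient R^{n x m} / <1_{nm}>.\<close>
definition quot_class :: "real^'m^'n \<Rightarrow> (real^'m^'n) set" where
  "quot_class B = {B + c *\<^sub>R ones_mat | c. True}"

definition strict_convex_on :: "'a::real_vector set \<Rightarrow> ('a \<Rightarrow> real) \<Rightarrow> bool" where
  "strict_convex_on S f \<longleftrightarrow> convex S \<and>
    (\<forall>x\<in>S. \<forall>y\<in>S. \<forall>t. x \<noteq> y \<and> 0 < t \<and> t < 1 \<longrightarrow>
       f ((1 - t) *\<^sub>R x + t *\<^sub>R y) < (1 - t) * f x + t * f y)"

end

theory Submission imports Defs begin

definition Em :: "'n \<Rightarrow> 'm \<Rightarrow> real^'m^'n" where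
  "Em a b = (\<chi> i j. if i = a \<and> j = b then 1 else 0)"

definition oplus :: "real^'n \<Rightarrow> real^'m \<Rightarrow> real^'m^'n" where
  "oplus \<alpha> \<beta> = (\<chi> i j. \<alpha>$i + \<beta>$j)"

lemma inner_mat: "(Y::real^'m^'n) \<bullet> W = (\<Sum>i\<in>UNIV. \<Sum>j\<in>UNIV. Y$i$j * W$i$j)"
  by (simp add: inner_vec_def)

lemma inner_Em: "(Y::real^'m^'n) \<bullet> Em a b = Y$a$b"
proof -
  have "(Y::real^'m^'n) \<bullet> Em a b = (\<Sum>i\<in>UNIV. \<Sum>j\<in>UNIV. if i = a \<and> j = b then Y$a$b else 0)"
    by (simp add: inner_mat Em_def if_distrib cong: if_cong)
  also have "\<dots> = (\<Sum>i\<in>UNIV. if i = a then Y$a$b else 0)"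
    by (intro sum.cong refl) auto
  also have "\<dots> = Y$a$b" by simp
  finally show ?thesis .
qed

lemma inner_ones: "ones_mat \<bullet> (W::real^'m^'n) = (\<Sum>i\<in>UNIV. \<Sum>j\<in>UNIV. W$i$j)"
  by (simp add: inner_mat ones_mat_def)

lemma inner_oplus: "oplus \<alpha> \<beta> \<bullet> (W::real^'m^'n) =
   (\<Sum>i\<in>UNIV. \<alpha>$i * (\<Sum>j\<in>UNIV. W$i$j)) + (\<Sum>j\<in>UNIV. \<beta>$j * (\<Sum>i\<in>UNIV. W$i$j))"
proof -
  have "oplus \<alpha> \<beta> \<bullet> W = (\<Sum>i\<in>UNIV. \<Sum>j\<in>UNIV. \<alpha>$i * W$i$j) + (\<Sum>i\<in>UNIV. \<Sum>j\<in>UNIV. \<beta>$j * W$i$j)"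
    by (simp add: inner_mat oplus_def distrib_right sum.distrib)
  also have "(\<Sum>i\<in>UNIV. \<Sum>j\<in>UNIV. \<beta>$j * W$i$j) = (\<Sum>j\<in>UNIV. \<Sum>i\<in>UNIV. \<beta>$j * W$i$j)"
    by (rule sum.swap)
  finally show ?thesis by (simp add: sum_distrib_left)
qed

lemma simplex_matD: "W \<in> simplex_mat \<Longrightarrow> W \<in> pos_mats \<and> ones_mat \<bullet> W = 1"
  by (simp add: simplex_mat_def inner_ones)

lemma simplex_pos: "W \<in> simplex_mat \<Longrightarrow> W$i$j > 0"
  by (simp add: simplex_mat_def pos_mats_def)

lemma simplex_norm: "W \<in> simplex_mat \<Longrightarrow> norm W \<le> 1"
proof -
  assume W: "W \<in> simplex_mat"
  have "norm W \<le> (\<Sum>i\<in>UNIV. norm (W$i))" unfolding norm_vec_def by (rule L2_set_le_sum) simp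
  also have "\<dots> \<le> (\<Sum>i\<in>UNIV. \<Sum>j\<in>UNIV. \<bar>W$i$j\<bar>)"
    by (intro sum_mono) (simp add: norm_le_l1_cart)
  also have "\<dots> = 1" using W by (simp add: simplex_mat_def pos_mats_def less_imp_le)
  finally show ?thesis .
qed

lemma ex_argmin: "\<exists>i0. \<forall>i. (f :: 'a::finite \<Rightarrow> real) i0 \<le> f i"
proof -
  have "Min (range f) \<in> range f" by (rule Min_in) auto
  then obtain i0 where i0: "Min (range f) = f i0" by blast
  have "f i0 \<le> f i" for i using Min_le[of "range f" "f i"] i0 by simp
  thus ?thesis by blast
qed

lemma ex_argmax: "\<exists>i1. \<forall>i. (f :: 'a::finite \<Rightarrow> real) i \<le> f i1"
  using ex_argmin[of "\<lambda>i. - f i"] by auto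

lemma inner_vec_const: "p \<in> simplex_vec \<Longrightarrow> vec c \<bullet> (p::real^'n) = c"
  by (simp add: inner_vec_def simplex_vec_def sum_distrib_left[symmetric])

lemma oplus_shift1: "oplus (a + vec c) b = oplus a b + c *\<^sub>R ones_mat"
  by (simp add: oplus_def ones_mat_def vec_eq_iff)

lemma oplus_shift2: "oplus a (b + vec c) = oplus a b + c *\<^sub>R ones_mat"
  by (simp add: oplus_def ones_mat_def vec_eq_iff)

lemma oplus_add_scale: "oplus (a + t *\<^sub>R u) (b + t *\<^sub>R v) = oplus a b + t *\<^sub>R oplus u v"
  by (simp add: oplus_def vec_eq_iff algebra_simps)

lemma oplus_uminus: "oplus (- u) (- v) = - oplus u v"
  by (simp add: oplus_def vec_eq_iff)

lemma oplus_nonneg: "(\<forall>i. 0 \<le> a$i) \<Longrightarrow> (\<forall>j. 0 \<le> b$j) \<Longrightarrow> 0 \<le> oplus a b $ i $ j"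
  by (simp add: oplus_def)

lemma oplus_cont: "continuous_on UNIV (\<lambda>x::(real^'n) \<times> (real^'m). oplus (fst x) (snd x))"
  unfolding oplus_def by (intro continuous_intros)

lemma sum_axis: "(\<Sum>k\<in>UNIV. axis i (1::real) $ k * g k) = g i"
proof -
  have "(\<Sum>k\<in>UNIV. axis i (1::real) $ k * g k) = (\<Sum>k\<in>UNIV. if k = i then g k else 0)"
    by (intro sum.cong) (auto simp: axis_def)
  thus ?thesis by simp
qed

lemma inner_axis_vec: "axis i 1 \<bullet> (p::real^'n) = p$i"
  by (simp add: inner_vec_def sum_axis)

lemma oplus_axis1: "oplus (axis i 1) 0 \<bullet> (W::real^'m^'n) = (\<Sum>j\<in>UNIV. W$i$j)"
  by (simp add: inner_oplus sum_axis)

lemma oplus_axis2: "oplus 0 (axis j 1) \<bullet> (W::real^'m^'n) = (\<Sum>i\<in>UNIV. W$i$j)"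
  by (simp add: inner_oplus sum_axis)

lemma lin_bound:
  fixes a p :: "real^'n"
  assumes p: "p \<in> simplex_vec" and pm: "\<And>k. pm \<le> p$k" and a0: "\<And>k. 0 \<le> a$k"
    and ai0: "a$i0 = 0" and ai1: "\<And>k. a$k \<le> a$i1"
  shows "a \<bullet> p \<le> a$i1 - a$i1 * pm"
proof -
  have "a \<bullet> p = (\<Sum>k\<in>UNIV. a$k * p$k)" by (simp add: inner_vec_def)
  also have "\<dots> \<le> (\<Sum>k\<in>UNIV. a$i1 * p$k - (if k = i0 then a$i1 * p$k else 0))"
  proof (rule sum_mono)
    fix k
    have pk: "0 \<le> p$k" using p by (simp add: simplex_vec_def less_imp_le)
    show "a$k * p$k \<le> a$i1 * p$k - (if k = i0 then a$i1 * p$k else 0)"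
      using ai0 mult_right_mono[OF ai1[of k] pk] by auto
  qed
  also have "\<dots> = a$i1 * (\<Sum>k\<in>UNIV. p$k) - a$i1 * p$i0"
    by (simp add: sum_subtractf sum_distrib_left)
  also have "\<dots> = a$i1 - a$i1 * p$i0" using p by (simp add: simplex_vec_def)
  also have "\<dots> \<le> a$i1 - a$i1 * pm"
    using mult_left_mono[OF pm[of i0], of "a$i1"] a0[of i1] by linarith
  finally show ?thesis .
qed

lemma sumEm_row: "(\<Sum>l\<in>UNIV. Em a b $ k $ l) = (if k = a then 1 else (0::real))"
  by (cases "k = a") (simp_all add: Em_def)

lemma sumEm_col: "(\<Sum>k\<in>UNIV. Em a b $ k $ l) = (if l = b then 1 else (0::real))"
  by (cases "l = b") (simp_all add: Em_def)

lemma coupling_oplus: "Q \<in> couplings p q \<Longrightarrow> oplus a b \<bullet> Q = a \<bullet> p + b \<bullet> q"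
  unfolding inner_oplus by (simp add: couplings_def inner_vec_def)

lemma coupling_ones: "Q \<in> couplings p q \<Longrightarrow> ones_mat \<bullet> Q = 1"
  unfolding inner_ones couplings_def simplex_mat_def by blast

lemma couplings_mid: "P1 \<in> couplings p q \<Longrightarrow> P2 \<in> couplings p q \<Longrightarrow>
   (1 - 1/2) *\<^sub>R P1 + (1/2::real) *\<^sub>R P2 \<in> couplings p q"
  unfolding couplings_def simplex_mat_def pos_mats_def
  by (auto simp: sum.distrib sum_divide_distrib[symmetric] add_pos_pos)

locale T2 =
  fixes \<Phi> :: "real^'m^'n \<Rightarrow> real" and S :: "real^'m^'n \<Rightarrow> real^'m^'n"
  assumes grad: "\<And>A. A \<in> pos_mats \<Longrightarrow>
      (\<Phi> has_derivative (\<lambda>H. \<Sum>i\<in>UNIV. \<Sum>j\<in>UNIV. S A $ i $ j * H $ i $ j)) (at A)"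
    and conv: "convex_on pos_mats \<Phi>"
    and strict: "strict_convex_on simplex_mat \<Phi>"
    and bij: "bij_betw (\<lambda>P. quot_class (S P)) simplex_mat (range quot_class)"
begin

lemma grad': "A \<in> pos_mats \<Longrightarrow> (\<Phi> has_derivative (\<lambda>H. S A \<bullet> H)) (at A)"
  using grad by (simp add: inner_mat)

lemma tangent:
  assumes A: "A \<in> pos_mats" and B: "B \<in> pos_mats"
  shows "\<Phi> A + S A \<bullet> (B - A) \<le> \<Phi> B"
proof -
  define d where "d = B - A"
  define g where "g t = \<Phi> (A + t *\<^sub>R d)" for t :: real
  have "((\<lambda>t. A + t *\<^sub>R d) has_derivative (\<lambda>t. t *\<^sub>R d)) (at 0)"
    by (auto intro!: derivative_eq_intros)
  moreover have "(\<Phi> has_derivative (\<bullet>) (S A)) (at (A + 0 *\<^sub>R d))" using grad'[OF A] by simp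
  ultimately have "(g has_derivative (\<lambda>t. S A \<bullet> (t *\<^sub>R d))) (at 0)"
    unfolding g_def by (rule has_derivative_compose)
  moreover have "(\<lambda>t. S A \<bullet> (t *\<^sub>R d)) = (*) (S A \<bullet> d)" by (auto simp: fun_eq_iff)
  ultimately have "(g has_field_derivative (S A \<bullet> d)) (at 0)"
    by (simp add: has_field_derivative_def)
  hence "((\<lambda>y. (g y - g 0) / (y - 0)) \<longlongrightarrow> S A \<bullet> d) (at 0)"
    unfolding has_field_derivative_iff .
  hence lim: "((\<lambda>t. (g t - g 0) / t) \<longlongrightarrow> S A \<bullet> d) (at_right 0)"
    by (simp add: filterlim_at_split)
  have ev0: "(g t - g 0) / t \<le> g 1 - g 0" if t: "t \<in> {0<..<1}" for t
  proof -
    have "A + t *\<^sub>R d = (1 - t) *\<^sub>R A + t *\<^sub>R B" by (simp add: d_def algebra_simps)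
    hence "g t \<le> (1 - t) * \<Phi> A + t * \<Phi> B"
      using convex_onD[OF conv, of t A B] t A B by (simp add: g_def)
    hence "g t - g 0 \<le> t * (g 1 - g 0)" by (simp add: g_def d_def algebra_simps)
    thus "(g t - g 0) / t \<le> g 1 - g 0" using t by (simp add: divide_le_eq mult.commute)
  qed
  have ev: "eventually (\<lambda>t. (g t - g 0) / t \<le> g 1 - g 0) (at_right 0)"
    using eventually_at_right_real[of 0 1] by (auto elim!: eventually_mono intro: ev0)
  have "S A \<bullet> d \<le> g 1 - g 0"
    by (rule tendsto_upperbound[OF lim ev]) simp
  thus ?thesis by (simp add: g_def d_def)
qed


definition Xof where "Xof y = (SOME P. P \<in> simplex_mat \<and> (\<exists>c. S P = y + c *\<^sub>R ones_mat))"

lemma Xof: "Xof y \<in> simplex_mat \<and> (\<exists>c. S (Xof y) = y + c *\<^sub>R ones_mat)"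
proof -
  have "quot_class y \<in> (\<lambda>P. quot_class (S P)) ` simplex_mat"
    using bij_betw_imp_surj_on[OF bij] by auto
  then obtain P where P: "P \<in> simplex_mat" "quot_class (S P) = quot_class y" by auto
  have "S P \<in> quot_class (S P)" unfolding quot_class_def by (auto intro: exI[of _ 0])
  hence "\<exists>c. S P = y + c *\<^sub>R ones_mat" using P(2) unfolding quot_class_def by auto
  hence "\<exists>P. P \<in> simplex_mat \<and> (\<exists>c. S P = y + c *\<^sub>R ones_mat)" using P(1) by blast
  thus ?thesis unfolding Xof_def by (rule someI_ex)
qed

lemma Xof_simplex: "Xof y \<in> simplex_mat" using Xof by blast

lemma Xof_max: assumes W: "W \<in> simplex_mat"
  shows "y \<bullet> W - \<Phi> W \<le> y \<bullet> Xof y - \<Phi> (Xof y)"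
proof -
  obtain c where c: "S (Xof y) = y + c *\<^sub>R ones_mat" using Xof by blast
  have t: "\<Phi> (Xof y) + S (Xof y) \<bullet> (W - Xof y) \<le> \<Phi> W"
    using tangent simplex_matD W Xof_simplex by blast
  have "S (Xof y) \<bullet> (W - Xof y) = y \<bullet> (W - Xof y)"
    using simplex_matD[OF W] simplex_matD[OF Xof_simplex[of y]]
    by (simp add: c inner_add_left inner_diff_right)
  thus ?thesis using t by (simp add: inner_diff_right)
qed

definition Fs where "Fs y = y \<bullet> Xof y - \<Phi> (Xof y)"

lemma Fs_ge: "W \<in> simplex_mat \<Longrightarrow> y \<bullet> W - \<Phi> W \<le> Fs y"
  using Xof_max by (simp add: Fs_def)

lemma max_unique:
  assumes M: "M \<in> simplex_mat" and mx: "\<And>W. W \<in> simplex_mat \<Longrightarrow> y \<bullet> W - \<Phi> W \<le> y \<bullet> M - \<Phi> M"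
  shows "M = Xof y"
proof (rule ccontr)
  assume ne: "M \<noteq> Xof y"
  define X where "X = Xof y"
  have X: "X \<in> simplex_mat" using Xof_simplex X_def by simp
  have cs: "convex (simplex_mat :: (real^'m^'n) set)" using strict[unfolded strict_convex_on_def] by (rule conjunct1)
  define mid where "mid = (1 - 1/2) *\<^sub>R M + (1/2::real) *\<^sub>R X"
  have mid: "mid \<in> simplex_mat" using convexD[OF cs M X, of "1 - 1/2" "1/2"] by (simp add: mid_def)
  have lt: "\<Phi> mid < (1 - 1/2) * \<Phi> M + (1/2) * \<Phi> X"
    using bspec[OF bspec[OF conjunct2[OF strict[unfolded strict_convex_on_def]] M] X, THEN spec[of _ "1/2"]] ne
    unfolding mid_def X_def by simp
  have e1: "y \<bullet> X - \<Phi> X \<le> y \<bullet> M - \<Phi> M" using mx X by blast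
  have e2: "y \<bullet> M - \<Phi> M \<le> y \<bullet> X - \<Phi> X" using Xof_max[OF M] X_def by simp
  have "y \<bullet> mid = (1/2) * (y \<bullet> M) + (1/2) * (y \<bullet> X)" by (simp add: mid_def inner_add_right)
  moreover have "(1 - 1/2) * \<Phi> M = 1/2 * \<Phi> M" by simp
  ultimately have "y \<bullet> M - \<Phi> M < y \<bullet> mid - \<Phi> mid" using lt e1 e2 by linarith
  thus False using mx[OF mid] by linarith
qed

lemma Fs_convex: "convex_on UNIV Fs"
proof (rule convex_onI)
  fix t :: real and x y :: "real^'m^'n"
  assume t: "0 < t" "t < 1"
  define Z where "Z = Xof ((1 - t) *\<^sub>R x + t *\<^sub>R y)"
  have Z: "Z \<in> simplex_mat" using Xof_simplex Z_def by simp
  have "Fs ((1 - t) *\<^sub>R x + t *\<^sub>R y) = (1 - t) * (x \<bullet> Z - \<Phi> Z) + t * (y \<bullet> Z - \<Phi> Z)"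
    unfolding Fs_def Z_def[symmetric] by (simp add: inner_add_left algebra_simps)
  also have "\<dots> \<le> (1 - t) * Fs x + t * Fs y"
    using Fs_ge[OF Z, of x] Fs_ge[OF Z, of y] t
    by (intro add_mono mult_left_mono) auto
  finally show "Fs ((1 - t) *\<^sub>R x + t *\<^sub>R y) \<le> (1 - t) * Fs x + t * Fs y" .
qed simp

lemma Fs_cont: "continuous_on UNIV Fs"
  using convex_on_continuous[OF open_UNIV Fs_convex] .

lemma Xof_lim:
  assumes yk: "yk \<longlonglongrightarrow> y" and xk: "(\<lambda>k. Xof (yk k)) \<longlonglongrightarrow> Xb"
  shows "Xb = Xof y"
proof -
  have nn: "Xb$i$j \<ge> 0" for i j
  proof -
    have "(\<lambda>k. Xof (yk k) $ i $ j) \<longlonglongrightarrow> Xb $ i $ j"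
      by (intro tendsto_vec_nth xk)
    thus ?thesis
      by (rule tendsto_lowerbound) (simp_all add: less_imp_le[OF simplex_pos[OF Xof_simplex]])
  qed
  have "(\<lambda>k. ones_mat \<bullet> Xof (yk k)) \<longlonglongrightarrow> ones_mat \<bullet> Xb"
    by (intro tendsto_inner tendsto_const xk)
  moreover have "(\<lambda>k. ones_mat \<bullet> Xof (yk k)) = (\<lambda>k. 1)"
    using simplex_matD[OF Xof_simplex] by auto
  ultimately have one: "ones_mat \<bullet> Xb = 1"
    using LIMSEQ_unique tendsto_const by metis
  have sub: "Fs y + (z - y) \<bullet> Xb \<le> Fs z" for z
  proof -
    have lim1: "(\<lambda>k. Fs (yk k) + (z - yk k) \<bullet> Xof (yk k)) \<longlonglongrightarrow> Fs y + (z - y) \<bullet> Xb"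
      using Fs_cont yk xk
      by (intro tendsto_intros) (auto intro: continuous_on_tendsto_compose[of UNIV Fs])
    have le1: "Fs (yk k) + (z - yk k) \<bullet> Xof (yk k) \<le> Fs z" for k
      using Fs_ge[OF Xof_simplex[of "yk k"], of z] by (simp add: Fs_def inner_diff_left)
    show ?thesis
      by (rule tendsto_upperbound[OF lim1]) (simp_all add: le1)
  qed
  show ?thesis
  proof (cases "\<exists>a b. Xb$a$b = 0")
    case True
    then obtain a b where ab: "Xb$a$b = 0" by blast
    have "Fs y \<le> Fs (y - Em a b)"
      using sub[of "y - Em a b"] ab by (simp add: inner_commute inner_Em)
    moreover
    define Z where "Z = Xof (y - Em a b)"
    have Z: "Z \<in> simplex_mat" using Xof_simplex Z_def by simp
    have "Fs (y - Em a b) = y \<bullet> Z - \<Phi> Z - Z$a$b"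
      by (simp add: Fs_def Z_def[symmetric] inner_diff_left inner_commute[of "Em a b"] inner_Em)
    moreover have "Z$a$b > 0" using simplex_pos[OF Z] .
    moreover have "y \<bullet> Z - \<Phi> Z \<le> Fs y" using Fs_ge[OF Z] .
    ultimately show ?thesis by linarith
  next
    case False
    have pos: "Xb$i$j > 0" for i j using nn[of i j] False by (metis order_le_less)
    have Xb: "Xb \<in> simplex_mat"
      using pos one by (simp add: simplex_mat_def pos_mats_def inner_ones)
    have "S Xb \<bullet> W - \<Phi> W \<le> S Xb \<bullet> Xb - \<Phi> Xb" if W: "W \<in> simplex_mat" for W
      using tangent[of Xb W] Xb W simplex_matD by (fastforce simp: inner_diff_right)
    hence "Fs (S Xb) \<le> S Xb \<bullet> Xb - \<Phi> Xb"
      using Xof_simplex by (simp add: Fs_def)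
    hence ge: "Fs y \<le> y \<bullet> Xb - \<Phi> Xb"
      using sub[of "S Xb"] by (simp add: inner_diff_left)
    show ?thesis
      by (rule max_unique[OF Xb]) (meson Fs_ge ge order_trans)
  qed
qed

lemma dir:
  assumes L: "\<And>t. t > 0 \<Longrightarrow> L \<le> z \<bullet> Xof (y + t *\<^sub>R z)"
  shows "L \<le> z \<bullet> Xof y"
proof -
  define yk where "yk k = y + inverse (real (Suc k)) *\<^sub>R z" for k
  have yk: "yk \<longlonglongrightarrow> y"
    unfolding yk_def using tendsto_add[OF tendsto_const tendsto_scaleR[OF LIMSEQ_inverse_real_of_nat tendsto_const], of y z]
    by simp
  define f where "f k = Xof (yk k)" for k
  have "bounded (range f)"
    unfolding bounded_iff f_def using simplex_norm[OF Xof_simplex] by auto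
  then obtain l r where r: "strict_mono (r::nat\<Rightarrow>nat)" and lim: "(f \<circ> r) \<longlonglongrightarrow> l"
    using bounded_imp_convergent_subsequence by blast
  have "(yk \<circ> r) \<longlonglongrightarrow> y" using LIMSEQ_subseq_LIMSEQ[OF yk r] .
  from Xof_lim[OF this] lim have l: "l = Xof y" by (simp add: f_def o_def)
  have lim2: "(\<lambda>k. z \<bullet> (f \<circ> r) k) \<longlonglongrightarrow> z \<bullet> l" by (intro tendsto_intros lim)
  have le2: "L \<le> z \<bullet> (f \<circ> r) k" for k
    unfolding f_def yk_def o_def by (rule L) simp
  show ?thesis unfolding l[symmetric]
    by (rule tendsto_lowerbound[OF lim2]) (auto intro!: always_eventually simp: le2[unfolded o_def])
qed


lemma Fs_shift: "Fs (y + c *\<^sub>R ones_mat) = Fs y + c"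
proof -
  have o1: "ones_mat \<bullet> Xof z = 1" for z using simplex_matD[OF Xof_simplex] by blast
  have "(y + c *\<^sub>R ones_mat) \<bullet> Xof y - \<Phi> (Xof y) \<le> Fs (y + c *\<^sub>R ones_mat)"
    by (rule Fs_ge[OF Xof_simplex])
  moreover have "y \<bullet> Xof (y + c *\<^sub>R ones_mat) - \<Phi> (Xof (y + c *\<^sub>R ones_mat)) \<le> Fs y"
    by (rule Fs_ge[OF Xof_simplex])
  ultimately show ?thesis by (simp add: Fs_def inner_add_left o1)
qed

lemma exists_dual:
  assumes p: "p \<in> simplex_vec" and q: "q \<in> simplex_vec"
  shows "\<exists>a b. Xof (oplus a b) \<in> couplings p q"
proof -
  define D where "D x = fst x \<bullet> p + snd x \<bullet> q - Fs (oplus (fst x) (snd x))"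
    for x :: "(real^'n) \<times> (real^'m)"
  have Dshift1: "D (a + vec c, b) = D (a, b)" for a b c
    by (simp add: D_def oplus_shift1 Fs_shift inner_add_left inner_vec_const[OF p])
  have Dshift2: "D (a, b + vec c) = D (a, b)" for a b c
    by (simp add: D_def oplus_shift2 Fs_shift inner_add_left inner_vec_const[OF q])
  have "continuous_on UNIV (\<lambda>x. Fs (oplus (fst x) (snd x)))"
    by (rule continuous_on_compose2[OF Fs_cont oplus_cont]) auto
  hence Dcont: "continuous_on UNIV D" unfolding D_def by (intro continuous_intros)
  obtain pi where pi: "\<And>i. p$pi \<le> p$i" using ex_argmin[of "(($) p)"] by blast
  define pm where "pm = p$pi"
  have pm: "pm > 0" "\<And>i. pm \<le> p$i" using p pi by (auto simp: pm_def simplex_vec_def)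
  obtain qi where qi: "\<And>i. q$qi \<le> q$i" using ex_argmin[of "(($) q)"] by blast
  define qm where "qm = q$qi"
  have qm: "qm > 0" "\<And>i. qm \<le> q$i" using q qi by (auto simp: qm_def simplex_vec_def)
  define \<delta> where "\<delta> = min (min pm qm) 1 / 2"
  have \<delta>: "\<delta> > 0" "\<delta> < 1" "2 * \<delta> \<le> pm" "2 * \<delta> \<le> qm" using pm qm by (auto simp: \<delta>_def)
  define N where "N = real (CARD('n) * CARD('m))"
  have N: "N > 0" by (simp add: N_def)
  define U :: "real^'m^'n" where "U = (1 / N) *\<^sub>R ones_mat"
  have "ones_mat \<bullet> (ones_mat::real^'m^'n) = N" unfolding inner_ones by (simp add: ones_mat_def N_def)
  hence oU: "ones_mat \<bullet> U = 1" using N by (simp add: U_def)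
  define Wm where "Wm i j = (1 - \<delta>) *\<^sub>R Em i j + \<delta> *\<^sub>R U" for i j
  have Wm: "Wm i j \<in> simplex_mat" for i j
  proof -
    have "ones_mat \<bullet> Wm i j = 1"
      by (simp add: Wm_def inner_add_right inner_Em oU) (simp add: ones_mat_def)
    moreover have "Wm i j $ k $ l > 0" for k l
      using \<delta> N by (simp add: Wm_def U_def Em_def ones_mat_def add_nonneg_pos)
    ultimately show ?thesis by (simp add: simplex_mat_def pos_mats_def inner_ones)
  qed
  define C where "C = (\<Sum>i\<in>UNIV. \<Sum>j\<in>UNIV. \<bar>\<Phi> (Wm i j)\<bar>)"
  have Cb: "\<Phi> (Wm i j) \<le> C" for i j
  proof -
    have "\<bar>\<Phi> (Wm i j)\<bar> \<le> (\<Sum>j\<in>UNIV. \<bar>\<Phi> (Wm i j)\<bar>)" by (rule member_le_sum) auto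
    also have "\<dots> \<le> C" unfolding C_def by (rule member_le_sum) (auto intro: sum_nonneg)
    finally show ?thesis by linarith
  qed
  have bound: "D (a, b) \<le> C - \<delta> * (a$i1 + b$j1)"
    if a0: "\<And>k. 0 \<le> a$k" and ai0: "a$i0 = 0" and ai1: "\<And>k. a$k \<le> a$i1"
      and b0: "\<And>k. 0 \<le> b$k" and bj0: "b$j0 = 0" and bj1: "\<And>k. b$k \<le> b$j1"
    for a b i0 i1 j0 j1
  proof -
    have ap: "a \<bullet> p \<le> a$i1 - a$i1 * pm" by (rule lin_bound[OF p pm(2) a0 ai0 ai1])
    have bq: "b \<bullet> q \<le> b$j1 - b$j1 * qm" by (rule lin_bound[OF q qm(2) b0 bj0 bj1])
    have "oplus a b \<bullet> U \<ge> 0"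
      using a0 b0 N by (simp add: inner_mat U_def oplus_def ones_mat_def sum_nonneg add_nonneg_nonneg)
    hence "(1 - \<delta>) * (a$i1 + b$j1) \<le> oplus a b \<bullet> Wm i1 j1"
      using \<delta> by (simp add: Wm_def inner_add_right inner_Em oplus_def)
    hence Fb: "(1 - \<delta>) * (a$i1 + b$j1) - C \<le> Fs (oplus a b)"
      using Fs_ge[OF Wm, of "oplus a b" i1 j1] Cb[of i1 j1] by linarith
    have m1: "a$i1 * \<delta> \<le> a$i1 * (pm - \<delta>)" using \<delta> a0[of i1] by (intro mult_left_mono) auto
    have m2: "b$j1 * \<delta> \<le> b$j1 * (qm - \<delta>)" using \<delta> b0[of j1] by (intro mult_left_mono) auto
    show ?thesis using ap bq Fb m1 m2 by (simp add: D_def algebra_simps)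
  qed
  define R where "R = max 0 ((C - D (0, 0)) / \<delta>)"
  define K where "K = cbox (0::real^'n) (vec R) \<times> cbox (0::real^'m) (vec R)"
  have R0: "R \<ge> 0" by (simp add: R_def)
  have K0: "(0, 0) \<in> K" using R0 by (simp add: K_def mem_box_cart)
  have "compact K" unfolding K_def by (intro compact_Times compact_cbox)
  then obtain xs where xs: "xs \<in> K" and xsm: "\<And>y. y \<in> K \<Longrightarrow> D y \<le> D xs"
    using continuous_attains_sup[of K D] K0 continuous_on_subset[OF Dcont] by blast
  have glob: "D (a, b) \<le> D xs" for a b
  proof -
    obtain i0 where i0: "\<And>i. a$i0 \<le> a$i" using ex_argmin[of "(($) a)"] by blast
    obtain j0 where j0: "\<And>j. b$j0 \<le> b$j" using ex_argmin[of "(($) b)"] by blast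
    define a' where "a' = a + vec (- (a$i0))"
    define b' where "b' = b + vec (- (b$j0))"
    have eq: "D (a', b') = D (a, b)" unfolding a'_def b'_def Dshift1 Dshift2 ..
    have a0: "0 \<le> a'$k" for k using i0[of k] by (simp add: a'_def)
    have b0: "0 \<le> b'$k" for k using j0[of k] by (simp add: b'_def)
    have ai0: "a'$i0 = 0" by (simp add: a'_def)
    have bj0: "b'$j0 = 0" by (simp add: b'_def)
    obtain i1 where i1: "\<And>i. a'$i \<le> a'$i1" using ex_argmax[of "(($) a')"] by blast
    obtain j1 where j1: "\<And>j. b'$j \<le> b'$j1" using ex_argmax[of "(($) b')"] by blast
    show ?thesis
    proof (cases "a'$i1 \<le> R \<and> b'$j1 \<le> R")
      case True
      have "a'$i \<le> R" for i using i1[of i] True by linarith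
      moreover have "b'$j \<le> R" for j using j1[of j] True by linarith
      ultimately have "(a', b') \<in> K" using a0 b0 by (auto simp: K_def mem_box_cart)
      thus ?thesis using xsm eq by fastforce
    next
      case False
      hence "R < a'$i1 + b'$j1" using a0[of i1] b0[of j1] by auto
      hence "(C - D (0, 0)) / \<delta> < a'$i1 + b'$j1" unfolding R_def by linarith
      hence "C - D (0, 0) < \<delta> * (a'$i1 + b'$j1)" using \<delta> by (simp add: pos_divide_less_eq mult.commute)
      moreover have "D (a', b') \<le> C - \<delta> * (a'$i1 + b'$j1)" by (rule bound[OF a0 ai0 i1 b0 bj0 j1])
      moreover have "D (0, 0) \<le> D xs" by (rule xsm[OF K0])
      ultimately show ?thesis using eq by linarith
    qed
  qed
  obtain as bs where xsd: "xs = (as, bs)" by (cases xs)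
  define ys where "ys = oplus as bs"
  have foc: "u \<bullet> p + v \<bullet> q \<le> oplus u v \<bullet> Xof ys" for u v
  proof (rule dir)
    fix t :: real assume t: "t > 0"
    define Xt where "Xt = Xof (ys + t *\<^sub>R oplus u v)"
    have "D (as + t *\<^sub>R u, bs + t *\<^sub>R v) \<le> D (as, bs)" using glob xsd by simp
    hence "(as + t *\<^sub>R u) \<bullet> p + (bs + t *\<^sub>R v) \<bullet> q - Fs (ys + t *\<^sub>R oplus u v)
        \<le> as \<bullet> p + bs \<bullet> q - Fs ys"
      by (simp add: D_def oplus_add_scale ys_def)
    moreover have "ys \<bullet> Xt - \<Phi> Xt \<le> Fs ys" by (rule Fs_ge) (simp add: Xt_def Xof_simplex)
    moreover have "Fs (ys + t *\<^sub>R oplus u v) = (ys + t *\<^sub>R oplus u v) \<bullet> Xt - \<Phi> Xt"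
      by (simp add: Fs_def Xt_def)
    ultimately have "t * (u \<bullet> p + v \<bullet> q) \<le> t * (oplus u v \<bullet> Xt)"
      by (simp add: inner_add_left algebra_simps)
    thus "u \<bullet> p + v \<bullet> q \<le> oplus u v \<bullet> Xof (ys + t *\<^sub>R oplus u v)"
      using t by (simp add: Xt_def)
  qed
  have foce: "u \<bullet> p + v \<bullet> q = oplus u v \<bullet> Xof ys" for u v
    using foc[of u v] foc[of "-u" "-v"] by (simp add: oplus_uminus)
  have rows: "(\<Sum>j\<in>UNIV. Xof ys $ i $ j) = p$i" for i
    using foce[of "axis i 1" 0] by (simp add: inner_axis_vec oplus_axis1)
  have cols: "(\<Sum>i\<in>UNIV. Xof ys $ i $ j) = q$j" for j
    using foce[of 0 "axis j 1"] by (simp add: inner_axis_vec oplus_axis2)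
  have "Xof ys \<in> couplings p q"
    using rows cols Xof_simplex by (simp add: couplings_def)
  thus ?thesis unfolding ys_def by blast
qed


lemma foc_min:
  assumes P: "P \<in> couplings p q" and minP: "\<forall>Q\<in>couplings p q. \<Phi> P \<le> \<Phi> Q"
  shows "\<exists>\<alpha> :: real^'n. \<exists>\<beta> :: real^'m. \<forall>i j. S P $ i $ j = \<alpha> $ i + \<beta> $ j"
proof -
  have Ps: "P \<in> simplex_mat" using P by (simp add: couplings_def)
  obtain kl where kl: "\<And>x. P $ fst kl $ snd kl \<le> P $ fst x $ snd x"
    using ex_argmin[of "\<lambda>x. P $ fst x $ snd x"] by blast
  define \<mu> where "\<mu> = P $ fst kl $ snd kl"
  have \<mu>: "\<mu> > 0" "\<And>k l. \<mu> \<le> P$k$l" using simplex_pos[OF Ps] kl[of "(k,l)" for k l]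
    by (auto simp: \<mu>_def)
  define i0 :: 'n where "i0 = undefined"
  define j0 :: 'm where "j0 = undefined"
  have key: "S P $ i $ j - S P $ i $ j0 - S P $ i0 $ j + S P $ i0 $ j0 = 0" for i j
  proof -
    define H where "H = Em i j - Em i j0 - Em i0 j + Em i0 j0"
    have rowH: "(\<Sum>l\<in>UNIV. H$k$l) = 0" for k
      by (simp add: H_def sum.distrib sum_subtractf sumEm_row)
    have colH: "(\<Sum>k\<in>UNIV. H$k$l) = 0" for l
      by (simp add: H_def sum.distrib sum_subtractf sumEm_col)
    have Habs: "\<bar>H$k$l\<bar> \<le> 4" for k l
      by (simp add: H_def Em_def)
    define d where "d = \<mu> / 4"
    have d: "d > 0" using \<mu> by (simp add: d_def)
    have inT: "P + t *\<^sub>R H \<in> couplings p q" if t: "t \<in> {-d<..<d}" for t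
    proof -
      have "\<bar>t * H$k$l\<bar> < \<mu>" for k l
      proof -
        have "\<bar>t * H$k$l\<bar> = \<bar>t\<bar> * \<bar>H$k$l\<bar>" by (simp add: abs_mult)
        also have "\<dots> \<le> \<bar>t\<bar> * 4" by (rule mult_left_mono[OF Habs]) simp
        also have "\<dots> < \<mu>" using t by (auto simp: d_def)
        finally show ?thesis .
      qed
      note bnd = this
      have pos: "(P + t *\<^sub>R H)$k$l > 0" for k l
      proof -
        have "- (t * H$k$l) < \<mu>" using bnd[of k l] by (simp add: abs_less_iff)
        thus ?thesis using \<mu>(2)[of k l] by simp
      qed
      have r: "(\<Sum>l\<in>UNIV. (P + t *\<^sub>R H)$k$l) = p$k" for k
        using P rowH[of k] by (simp add: couplings_def sum.distrib sum_distrib_left[symmetric])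
      have c: "(\<Sum>k\<in>UNIV. (P + t *\<^sub>R H)$k$l) = q$l" for l
        using P colH[of l] by (simp add: couplings_def sum.distrib sum_distrib_left[symmetric])
      have tot: "(\<Sum>k\<in>UNIV. \<Sum>l\<in>UNIV. (P + t *\<^sub>R H)$k$l) = 1"
      proof -
        have "(\<Sum>k\<in>UNIV. \<Sum>l\<in>UNIV. (P + t *\<^sub>R H)$k$l) = (\<Sum>k\<in>UNIV. \<Sum>l\<in>UNIV. P$k$l)"
          using rowH by (simp add: sum.distrib sum_distrib_left[symmetric])
        thus ?thesis using Ps by (simp add: simplex_mat_def)
      qed
      show ?thesis using pos r c tot by (simp add: couplings_def simplex_mat_def pos_mats_def)
    qed
    define g where "g t = \<Phi> (P + t *\<^sub>R H)" for t :: real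
    have "((\<lambda>t. P + t *\<^sub>R H) has_derivative (\<lambda>t. t *\<^sub>R H)) (at 0)"
      by (auto intro!: derivative_eq_intros)
    moreover have "(\<Phi> has_derivative (\<bullet>) (S P)) (at (P + 0 *\<^sub>R H))"
      using grad'[OF conjunct1[OF simplex_matD[OF Ps]]] by simp
    ultimately have "(g has_derivative (\<lambda>t. S P \<bullet> (t *\<^sub>R H))) (at 0)"
      unfolding g_def by (rule has_derivative_compose)
    moreover have "\<forall>y\<in>{-d<..<d}. g 0 \<le> g y"
      using minP inT by (simp add: g_def)
    ultimately have "(\<lambda>t. S P \<bullet> (t *\<^sub>R H)) = (\<lambda>v. 0)"
      using d by (intro differential_zero_maxmin[of 0 "{-d<..<d}"]) auto
    hence "S P \<bullet> H = 0" by (metis scaleR_one)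
    thus ?thesis by (simp add: H_def inner_diff_right inner_add_right inner_Em)
  qed
  define \<alpha> :: "real^'n" where "\<alpha> = (\<chi> i. S P $ i $ j0)"
  define \<beta> :: "real^'m" where "\<beta> = (\<chi> j. S P $ i0 $ j - S P $ i0 $ j0)"
  have "\<forall>i j. S P $ i $ j = \<alpha> $ i + \<beta> $ j"
    using key by (simp add: \<alpha>_def \<beta>_def algebra_simps)
  thus ?thesis by blast
qed

end

theorem theorem2:
  fixes \<Phi> :: "real^'m^'n \<Rightarrow> real"
    and S :: "real^'m^'n \<Rightarrow> real^'m^'n"
    and p :: "real^'n" and q :: "real^'m"
  assumes grad: "\<And>A. A \<in> pos_mats \<Longrightarrow>
      (\<Phi> has_derivative (\<lambda>H. \<Sum>i\<in>UNIV. \<Sum>j\<in>UNIV. S A $ i $ j * H $ i $ j)) (at A)"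
    and conv: "convex_on pos_mats \<Phi>"
    and hom: "\<And>t A. t > 0 \<Longrightarrow> A \<in> pos_mats \<Longrightarrow> \<Phi> (t *\<^sub>R A) = t * \<Phi> A"
    and strict: "strict_convex_on simplex_mat \<Phi>"
    and bij: "bij_betw (\<lambda>P. quot_class (S P)) simplex_mat (range quot_class)"
    and p: "p \<in> simplex_vec" and q: "q \<in> simplex_vec"
  shows "(\<exists>!P. P \<in> couplings p q \<and> (\<forall>Q\<in>couplings p q. \<Phi> P \<le> \<Phi> Q))
    \<and> (\<forall>P. P \<in> couplings p q \<and> (\<forall>Q\<in>couplings p q. \<Phi> P \<le> \<Phi> Q) \<longrightarrow>
         (\<exists>\<alpha> :: real^'n. \<exists>\<beta> :: real^'m. \<forall>i j. S P $ i $ j = \<alpha> $ i + \<beta> $ j))"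
proof -
  interpret T2 \<Phi> S using grad conv strict bij by unfold_locales auto
  obtain a b where Ps: "Xof (oplus a b) \<in> couplings p q" using exists_dual[OF p q] by blast
  define P where "P = Xof (oplus a b)"
  obtain c where c: "S P = oplus a b + c *\<^sub>R ones_mat" using Xof P_def by blast
  have Pc: "P \<in> couplings p q" using Ps P_def by simp
  have Psim: "P \<in> simplex_mat" using Pc by (simp add: couplings_def)
  have minP: "\<forall>Q\<in>couplings p q. \<Phi> P \<le> \<Phi> Q"
  proof
    fix Q assume Q: "Q \<in> couplings p q"
    have Qs: "Q \<in> simplex_mat" using Q by (simp add: couplings_def)
    have "\<Phi> P + S P \<bullet> (Q - P) \<le> \<Phi> Q"
      using tangent Psim Qs simplex_matD by blast
    moreover have "S P \<bullet> (Q - P) = 0"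
      using coupling_oplus[OF Q] coupling_oplus[OF Pc] coupling_ones[OF Q] coupling_ones[OF Pc]
      by (simp add: c inner_diff_right inner_add_left)
    ultimately show "\<Phi> P \<le> \<Phi> Q" by simp
  qed
  have uniq: "P1 = P2" if P1: "P1 \<in> couplings p q" "\<forall>Q\<in>couplings p q. \<Phi> P1 \<le> \<Phi> Q"
    and P2: "P2 \<in> couplings p q" "\<forall>Q\<in>couplings p q. \<Phi> P2 \<le> \<Phi> Q" for P1 P2
  proof (rule ccontr)
    assume ne: "P1 \<noteq> P2"
    have mid: "(1 - 1/2) *\<^sub>R P1 + (1/2::real) *\<^sub>R P2 \<in> couplings p q"
      by (rule couplings_mid[OF P1(1) P2(1)])
    have P1s: "P1 \<in> simplex_mat" and P2s: "P2 \<in> simplex_mat" using P1 P2 by (auto simp: couplings_def)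
    have "\<Phi> ((1 - 1/2) *\<^sub>R P1 + (1/2::real) *\<^sub>R P2) < (1 - 1/2) * \<Phi> P1 + (1/2) * \<Phi> P2"
      using bspec[OF bspec[OF conjunct2[OF strict[unfolded strict_convex_on_def]] P1s] P2s, THEN spec[of _ "1/2"]] ne
      by simp
    moreover have "\<Phi> P1 \<le> \<Phi> P2" "\<Phi> P2 \<le> \<Phi> P1" using P1 P2 by auto
    hence "(1 - 1/2) * \<Phi> P1 + (1/2) * \<Phi> P2 = \<Phi> P1" by simp
    moreover have "\<Phi> P1 \<le> \<Phi> ((1 - 1/2) *\<^sub>R P1 + (1/2::real) *\<^sub>R P2)" using P1(2) mid by blast
    ultimately show False by linarith
  qed
  have "\<exists>!P. P \<in> couplings p q \<and> (\<forall>Q\<in>couplings p q. \<Phi> P \<le> \<Phi> Q)"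
    using Pc minP uniq by blast
  moreover have "\<forall>P. P \<in> couplings p q \<and> (\<forall>Q\<in>couplings p q. \<Phi> P \<le> \<Phi> Q) \<longrightarrow>
         (\<exists>\<alpha> :: real^'n. \<exists>\<beta> :: real^'m. \<forall>i j. S P $ i $ j = \<alpha> $ i + \<beta> $ j)"
    using foc_min by blast
  ultimately show ?thesis by blast
qed

end
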